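(* Let $a\in\mathbb{R}$, $x,y:\mathbb{N}_{a+1}\to\mathbb{R}$, $X(s)=\mathcal{N}_a\{x(k)\}$ and $Y(s)=\mathcal{N}_a\{y(k)\}$. Then $$\sum_{k=a+1}^{\infty}x(k)\,y^*(k)=\frac{1}{2\pi\mathrm{i}}\oint_c X(z)\,Y^*\Big(\frac{z^*}{z^*-1}\Big)(1-z)^{-1}\,\mathrm{d}z,$$ where $\zeta^*$ denotes complex conjugation, the sum is over $k=a+1,a+2,\dots$, and $c$ is a closed curve encircling the point $1$ (i.e. $(1,\mathrm{i}0)$) traversed clockwise and lying in the overlapping region of convergence of $X(z)$ and $Y^*\big(\frac{z^*}{z^*-1}\big)$.
   Context: For $a\in\mathbb{R}$, $\mathbb{N}_{a+1}=\{a+1,a+2,\dots\}$. For $f:\mathbb{N}_{a+1}\to\mathbb{C}$, the nabla Laplace transform ($N$-transform) is $\mathcal{N}_a\{f(k)\}=\sum_{k=1}^{\infty}(1-s)^{k-1}f(k+a)$, for those complex $s$ for which the series converges. Its inverse is given by $f(k)=\frac{1}{2\pi\mathrm{i}}\oint_c F(s)(1-s)^{-k+a}\,\mathrm{d}s$, $k\in\mathbb{N}_{a+1}$, with $c$ a clockwise closed curve around $1$ in the region of convergence of $F$. *)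

theory Defs
  imports "HOL-Complex_Analysis.Complex_Analysis"
begin

text \<open>Nabla Laplace transform: N_a{f}(s) = sum_{k>=1} (1-s)^(k-1) f(k+a),
  written with index j = k - 1 starting at 0.\<close>
definition N_transform :: "real \<Rightarrow> (real \<Rightarrow> real) \<Rightarrow> complex \<Rightarrow> complex" where
  "N_transform a f s = (\<Sum>j. (1 - s) ^ j * complex_of_real (f (a + real j + 1)))"

definition N_ROC :: "real \<Rightarrow> (real \<Rightarrow> real) \<Rightarrow> complex set" where
  "N_ROC a f = interior {s. summable (\<lambda>j. (1 - s) ^ j * complex_of_real (f (a + real j + 1)))}"

text \<open>Region of convergence of z \<mapsto> Y^*(z^*/(z^*-1)), where Y = N_a{y} and Y^* is its complex conjugate.\<close>
definition N_ROC_reflected :: "real \<Rightarrow> (real \<Rightarrow> real) \<Rightarrow> complex set" where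
  "N_ROC_reflected a f = interior {z. z \<noteq> 1 \<and>
      summable (\<lambda>j. (1 - cnj z / (cnj z - 1)) ^ j * complex_of_real (f (a + real j + 1)))}"

end

theory Submission
  imports Defs
begin
lemma int_pow_integral:
  fixes c :: "real \<Rightarrow> complex" and k :: int
  assumes "valid_path c" "pathfinish c = pathstart c" "1 \<notin> path_image c" "k \<noteq> -1"
  shows "((\<lambda>z. (1 - z) powi k) has_contour_integral 0) c"
proof (rule Cauchy_theorem_primitive[where S = "- {1}"
    and f = "\<lambda>z. (- 1 / of_int (k+1)) * (1 - z) powi (k+1)"])
  fix z :: complex assume z: "z \<in> - {1}"
  have kk: "(of_int (k+1) :: complex) \<noteq> 0" proof
    assume "(of_int (k+1) :: complex) = 0"
    then have "k + 1 = 0" by (metis of_int_0 of_int_eq_iff)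
    then show False using assms(4) by simp
  qed
  have "((\<lambda>z. (1 - z) powi (k+1)) has_field_derivative
          (of_int (k+1) * (1-z) powi (k + 1 - 1) * (-1))) (at z within - {1})"
    using z by (intro DERIV_power_int derivative_eq_intros) auto
  then have "((\<lambda>z. (- 1 / of_int (k+1)) * (1 - z) powi (k+1)) has_field_derivative
          (- 1 / of_int (k+1)) * (of_int (k+1) * (1-z) powi (k + 1 - 1) * (-1))) (at z within - {1})"
    by (rule DERIV_cmult)
  moreover have "(- 1 / of_int (k+1)) * (of_int (k+1) * (1-z) powi (k + 1 - 1) * (-1)) = (1-z) powi k"
    using kk by simp
  ultimately show "((\<lambda>z. (- 1 / of_int (k+1)) * (1 - z) powi (k+1)) has_field_derivative (1-z) powi k) (at z within - {1})"
    by simp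
qed (use assms in auto)

lemma inv_integral:
  fixes c :: "real \<Rightarrow> complex"
  assumes "valid_path c" "1 \<notin> path_image c" "winding_number c 1 = -1"
  shows "((\<lambda>z. inverse (1 - z)) has_contour_integral 2 * pi * \<i>) c"
proof -
  have "((\<lambda>w. 1/(w - 1)) has_contour_integral (2*pi*\<i>*winding_number c 1)) c"
    using assms by (intro has_contour_integral_winding_number) auto
  then have "((\<lambda>w. - (1/(w - 1))) has_contour_integral - (2*pi*\<i>*winding_number c 1)) c"
    by (rule has_contour_integral_neg)
  then have "((\<lambda>w. - (1/(w - 1))) has_contour_integral 2 * pi * \<i>) c"
    using assms(3) by simp
  then show ?thesis
    by (rule has_contour_integral_eq) (auto simp: field_simps divide_simps)
qed

lemma pow_combine:
  fixes z :: complex assumes "z \<noteq> 1"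
  shows "(1 - z) ^ j * inverse (1 - z) ^ (l + 1) = (1 - z) powi (int j - int l - 1)"
proof -
  have nz: "1 - z \<noteq> 0" using assms by simp
  have "(1 - z) powi (int j - int l - 1) = (1 - z) powi (int j) * (1-z) powi (- int (l+1))"
    using nz by (subst power_int_add[symmetric]) (auto simp: algebra_simps)
  also have "\<dots> = (1 - z) ^ j * inverse (1 - z) ^ (l + 1)"
    by (simp add: power_int_minus power_inverse power_int_of_nat del: of_nat_Suc)
  finally show ?thesis by simp
qed

lemma term_integral:
  fixes c :: "real \<Rightarrow> complex"
  assumes "valid_path c" "pathfinish c = pathstart c" "1 \<notin> path_image c" "winding_number c 1 = -1"
  shows "((\<lambda>z. (1 - z) ^ j * inverse (1 - z) ^ (l + 1)) has_contour_integral
           (if l = j then 2 * pi * \<i> else 0)) c"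
proof (cases "l = j")
  case True
  have "(1 - z) ^ j * inverse (1 - z) ^ (l + 1) = inverse (1 - z)" if "z \<in> path_image c" for z
  proof -
    have "z \<noteq> 1" using that assms(3) by auto
    then have "(1 - z) ^ j * inverse (1 - z) ^ j = 1"
      by (simp add: power_mult_distrib[symmetric])
    then show ?thesis using True by (simp add: mult.assoc[symmetric])
  qed
  note eq = this
  from True have v: "(if l = j then 2 * pi * \<i> else 0) = 2 * pi * \<i>" by simp
  show ?thesis unfolding v
    by (rule has_contour_integral_eq[OF inv_integral[OF assms(1,3,4)]]) (metis eq)
next
  case False
  have "((\<lambda>z. (1 - z) powi (int j - int l - 1)) has_contour_integral 0) c"
    using False by (intro int_pow_integral assms) auto
  note h = this
  from False have v: "(if l = j then 2 * pi * \<i> else 0) = (0::complex)" by simp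
  show ?thesis unfolding v
    by (rule has_contour_integral_eq[OF h]) (metis pow_combine assms(3))
qed

lemma UL:
  fixes f :: "nat \<Rightarrow> complex \<Rightarrow> complex"
  assumes S: "open S" and c: "valid_path c" "path_image c \<subseteq> S"
    and hf: "\<And>n. f n holomorphic_on S" and hl: "l' holomorphic_on S"
    and ul: "uniform_limit S f l sequentially" and eq: "\<And>z. z \<in> S \<Longrightarrow> l z = l' z"
  shows "(\<lambda>n. contour_integral c (f n)) \<longlonglongrightarrow> contour_integral c l'"
proof -
  obtain L where L: "0 < L" and LB: "\<And>f B. f holomorphic_on S \<Longrightarrow> (\<forall>z \<in> S. norm(f z) \<le> B)
               \<Longrightarrow> norm(contour_integral c f) \<le> L*B"
    using contour_integral_bound_exists[OF S c] by blast
  show ?thesis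
  proof (rule tendstoI)
    fix e :: real assume e: "0 < e"
    have "eventually (\<lambda>n. \<forall>x\<in>S. dist (f n x) (l x) < e / (2*L)) sequentially"
      using uniform_limitD[OF ul] e L by simp
    then show "eventually (\<lambda>n. dist (contour_integral c (f n)) (contour_integral c l') < e) sequentially"
    proof (rule eventually_mono)
      fix n assume H: "\<forall>x\<in>S. dist (f n x) (l x) < e / (2*L)"
      have hd: "(\<lambda>z. f n z - l' z) holomorphic_on S" using hf hl by (intro holomorphic_intros)
      have "\<forall>z\<in>S. norm (f n z - l' z) \<le> e / (2*L)"
        using H eq by (auto simp: dist_norm less_imp_le)
      then have "norm (contour_integral c (\<lambda>z. f n z - l' z)) \<le> L * (e / (2*L))"
        using LB[OF hd] by blast
      also have "\<dots> < e" using L e by simp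
      also have "contour_integral c (\<lambda>z. f n z - l' z) = contour_integral c (f n) - contour_integral c l'"
        by (rule contour_integral_diff; rule contour_integrable_holomorphic_simple[OF _ S c(1) c(2)])
           (use hf hl in auto)
      finally show "dist (contour_integral c (f n)) (contour_integral c l') < e"
        by (simp add: dist_norm)
    qed
  qed
qed


lemma powser_holo:
  fixes q :: "nat \<Rightarrow> complex" and r :: real
  assumes "summable (\<lambda>l. norm (q l) * r ^ l)"
  shows "(\<lambda>w. \<Sum>l. q l * w ^ l) holomorphic_on ball 0 r"
proof (cases "0 < r")
  case False
  then have "ball (0::complex) r = {}" by simp
  then show ?thesis by (simp only: holomorphic_on_empty)
next
  case r: True
  have nn: "norm (q l * of_real r ^ l) = norm (q l) * r ^ l" for l
    using r by (simp add: norm_mult norm_power)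
  have s: "summable (\<lambda>l. q l * (of_real r) ^ l)"
    by (rule summable_norm_cancel) (simp only: nn assms)
  have "(\<lambda>w. \<Sum>l. q l * w ^ l) field_differentiable (at w)" if "w \<in> ball 0 r" for w
  proof -
    have "norm w < norm (of_real r :: complex)" using that r by simp
    from termdiffs_strong[OF s this] show ?thesis
      unfolding field_differentiable_def by (rule exI)
  qed
  then show ?thesis
    by (simp add: field_differentiable_at_within holomorphic_on_def)
qed

lemma powser_bound:
  fixes q :: "nat \<Rightarrow> complex" and r :: real
  assumes "summable (\<lambda>l. norm (q l) * r ^ l)" "norm w \<le> r"
  shows "norm (\<Sum>l. q l * w ^ l) \<le> (\<Sum>l. norm (q l) * r ^ l)"
proof -
  have b: "norm (q l * w ^ l) \<le> norm (q l) * r ^ l" for l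
    unfolding norm_mult norm_power
    by (intro mult_left_mono power_mono assms(2)) auto
  have sn: "summable (\<lambda>l. norm (q l * w ^ l))"
    by (rule summable_comparison_test[OF _ assms(1)]) (use b in auto)
  have "norm (\<Sum>l. q l * w ^ l) \<le> (\<Sum>l. norm (q l * w ^ l))" by (rule summable_norm[OF sn])
  also have "\<dots> \<le> (\<Sum>l. norm (q l) * r ^ l)"
    by (rule suminf_le[OF b sn assms(1)])
  finally show ?thesis .
qed

lemma powser_summable:
  fixes q :: "nat \<Rightarrow> complex" and r :: real
  assumes "summable (\<lambda>l. norm (q l) * r ^ l)" "norm w \<le> r"
  shows "summable (\<lambda>l. q l * w ^ l)"
proof -
  have b: "norm (q l * w ^ l) \<le> norm (q l) * r ^ l" for l
    unfolding norm_mult norm_power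
    by (intro mult_left_mono power_mono assms(2)) auto
  show ?thesis
    by (rule summable_comparison_test[OF _ assms(1)]) (use b in auto)
qed


lemma core:
  fixes px qy :: "nat \<Rightarrow> complex" and c :: "real \<Rightarrow> complex" and r1 r2 :: real
  assumes c: "valid_path c" "pathfinish c = pathstart c" "winding_number c 1 = -1"
    and cA: "path_image c \<subseteq> {z. r1 < cmod (1 - z) \<and> cmod (1 - z) < r2}"
    and r1: "0 < r1"
    and sx: "summable (\<lambda>j. norm (px j) * r2 ^ j)"
    and sy: "summable (\<lambda>l. norm (qy l) * (1 / r1) ^ l)"
  shows "(\<lambda>j. px j * qy j) sums (contour_integral c
           (\<lambda>z. (\<Sum>j. px j * (1 - z) ^ j) * ((\<Sum>l. qy l * inverse (1 - z) ^ l) * inverse (1 - z))) / (2 * pi * \<i>))"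
proof -
  define A where "A = {z. r1 < cmod (1 - z) \<and> cmod (1 - z) < r2}"
  define PX where "PX = (\<lambda>w. \<Sum>j. px j * w ^ j)"
  define QY where "QY = (\<lambda>w. \<Sum>l. qy l * w ^ l)"
  define G where "G = (\<lambda>z. QY (inverse (1 - z)) * inverse (1 - z))"
  have cA': "path_image c \<subseteq> A" using cA by (simp add: A_def)
  have oA: "open A" unfolding A_def
    by (intro open_Collect_conj open_Collect_less continuous_intros)
  have A1: "z \<noteq> 1" "cmod (1 - z) \<le> r2" "r1 \<le> cmod (1 - z)" "norm (inverse (1 - z)) \<le> 1 / r1"
     "norm (inverse (1 - z)) < 1 / r1" if "z \<in> A" for z
  proof -
    show "z \<noteq> 1" "cmod (1 - z) \<le> r2" "r1 \<le> cmod (1 - z)" using that r1 by (auto simp: A_def)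
    have h: "r1 < cmod (1 - z)" using that by (simp add: A_def)
    then have "1 / cmod (1 - z) < 1 / r1" using r1 by (intro divide_strict_left_mono) (auto intro!: mult_pos_pos)
    then show "norm (inverse (1 - z)) < 1 / r1" by (metis norm_inverse inverse_eq_divide)
    then show "norm (inverse (1 - z)) \<le> 1 / r1" by simp
  qed
  have n1: "1 \<notin> path_image c" using cA' A1(1) by blast
  have r2: "0 < r2" using cA' A1 r1 path_image_nonempty[of c] by force
  have holPX: "PX holomorphic_on ball 0 r2" unfolding PX_def by (rule powser_holo[OF sx])
  have holQY: "QY holomorphic_on ball 0 (1/r1)" unfolding QY_def by (rule powser_holo[OF sy])
  have holX: "(\<lambda>z. PX (1 - z)) holomorphic_on A"
  proof -
    have "(PX \<circ> (\<lambda>z. 1 - z)) holomorphic_on A"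
      by (rule holomorphic_on_compose_gen[OF _ holPX]) (auto intro!: holomorphic_intros simp: A_def dist_norm norm_minus_commute)
    then show ?thesis by (simp add: o_def)
  qed
  have holG: "G holomorphic_on A"
  proof -
    have "(QY \<circ> (\<lambda>z. inverse (1 - z))) holomorphic_on A"
      by (rule holomorphic_on_compose_gen[OF _ holQY]) (auto intro!: holomorphic_intros dest: A1)
    then show ?thesis unfolding G_def o_def
      by (intro holomorphic_intros) (auto dest: A1)
  qed
  define BG where "BG = (\<Sum>l. norm (qy l) * (1 / r1) ^ l) * (1 / r1)"
  have Gb: "norm (G z) \<le> BG" if "z \<in> A" for z
  proof -
    have "norm (G z) = norm (QY (inverse (1 - z))) * norm (inverse (1 - z))"
      by (simp add: G_def norm_mult)
    also have "\<dots> \<le> BG" unfolding BG_def QY_def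
      by (intro mult_mono powser_bound[OF sy] A1[OF that]) (use r1 in \<open>auto intro!: suminf_nonneg sy\<close>)
    finally show ?thesis .
  qed
  have step1: "contour_integral c (\<lambda>z. (1 - z) ^ j * G z) = 2 * pi * \<i> * qy j" for j
  proof -
    define f where "f = (\<lambda>l z. qy l * ((1 - z) ^ j * inverse (1 - z) ^ (l + 1)))"
    define M where "M = (\<lambda>l. norm (qy l) * (1 / r1) ^ l * (r2 ^ j * (1 / r1)))"
    have fb: "norm (f l z) \<le> M l" if "z \<in> A" for l z
    proof -
      have "norm (f l z) = norm (qy l) * (cmod (1 - z) ^ j * (norm (inverse (1 - z)) ^ l * norm (inverse (1 - z))))"
        by (simp add: f_def norm_mult norm_power)
      also have "\<dots> \<le> norm (qy l) * (r2 ^ j * ((1 / r1) ^ l * (1 / r1)))"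
        using A1[OF that] r1 r2 by (intro mult_left_mono mult_mono power_mono) auto
      finally show ?thesis by (simp add: M_def mult_ac)
    qed
    have sM: "summable M" unfolding M_def by (intro summable_mult2 sy)
    have ul: "uniform_limit A (\<lambda>n z. \<Sum>l<n. f l z) (\<lambda>z. \<Sum>l. f l z) sequentially"
      by (rule Weierstrass_m_test[OF fb sM])
    have eq: "(\<Sum>l. f l z) = (1 - z) ^ j * G z" if "z \<in> A" for z
    proof -
      have s: "summable (\<lambda>l. qy l * inverse (1 - z) ^ l)"
        by (rule powser_summable[OF sy A1(4)[OF that]])
      have "(\<Sum>l. f l z) = (\<Sum>l. qy l * inverse (1 - z) ^ l * ((1 - z) ^ j * inverse (1 - z)))"
        unfolding f_def by (intro suminf_cong) (simp add: mult_ac)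
      also have "\<dots> = (\<Sum>l. qy l * inverse (1 - z) ^ l) * ((1 - z) ^ j * inverse (1 - z))"
        by (rule suminf_mult2[OF s, symmetric])
      finally show ?thesis by (simp add: G_def QY_def mult_ac)
    qed
    have holf: "(\<lambda>z. \<Sum>l<n. f l z) holomorphic_on A" for n
      unfolding f_def by (intro holomorphic_intros) (auto dest: A1)
    have holl: "(\<lambda>z. (1 - z) ^ j * G z) holomorphic_on A"
      using holG by (intro holomorphic_intros)
    have lim: "(\<lambda>n. contour_integral c (\<lambda>z. \<Sum>l<n. f l z)) \<longlonglongrightarrow> contour_integral c (\<lambda>z. (1 - z) ^ j * G z)"
      by (rule UL[OF oA c(1) cA' holf holl ul eq])
    have ti: "f l contour_integrable_on c" for l
      unfolding f_def by (rule contour_integrable_lmul, rule has_contour_integral_integrable[OF term_integral[OF c(1,2) n1 c(3)]])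
    have fv: "contour_integral c (f l) = (if l = j then qy l * (2 * pi * \<i>) else 0)" for l
    proof -
      have "(f l has_contour_integral qy l * (if l = j then 2 * pi * \<i> else 0)) c"
        unfolding f_def by (rule has_contour_integral_lmul[OF term_integral[OF c(1,2) n1 c(3)]])
      from contour_integral_unique[OF this] show ?thesis by simp
    qed
    have val: "contour_integral c (\<lambda>z. \<Sum>l<n. f l z) = (\<Sum>l<n. (if l = j then qy l * (2 * pi * \<i>) else 0))" for n
    proof -
      have "contour_integral c (\<lambda>z. \<Sum>l<n. f l z) = (\<Sum>l<n. contour_integral c (f l))"
        by (rule contour_integral_sum) (auto intro: ti)
      also have "\<dots> = (\<Sum>l<n. (if l = j then qy l * (2 * pi * \<i>) else 0))"
        by (intro sum.cong refl) (rule fv)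
      finally show ?thesis .
    qed
    have "eventually (\<lambda>n. contour_integral c (\<lambda>z. \<Sum>l<n. f l z) = qy j * (2 * pi * \<i>)) sequentially"
      using eventually_ge_at_top[of "Suc j"] by eventually_elim (simp add: val sum.delta')
    then have "(\<lambda>n. contour_integral c (\<lambda>z. \<Sum>l<n. f l z)) \<longlonglongrightarrow> qy j * (2 * pi * \<i>)"
      by (rule tendsto_eventually)
    from LIMSEQ_unique[OF lim this] show ?thesis by (simp add: mult.commute)
  qed
  define g where "g = (\<lambda>j z. px j * ((1 - z) ^ j * G z))"
  define M where "M = (\<lambda>j. norm (px j) * r2 ^ j * BG)"
  have gb: "norm (g j z) \<le> M j" if "z \<in> A" for j z
  proof -
    have "norm (g j z) = norm (px j) * (cmod (1 - z) ^ j * norm (G z))"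
      by (simp add: g_def norm_mult norm_power)
    also have "\<dots> \<le> norm (px j) * (r2 ^ j * BG)"
      using A1[OF that] Gb[OF that] r1 r2 by (intro mult_left_mono mult_mono power_mono) auto
    finally show ?thesis by (simp add: M_def mult_ac)
  qed
  have sM: "summable M" unfolding M_def by (intro summable_mult2 sx)
  have ul: "uniform_limit A (\<lambda>n z. \<Sum>j<n. g j z) (\<lambda>z. \<Sum>j. g j z) sequentially"
    by (rule Weierstrass_m_test[OF gb sM])
  have eq: "(\<Sum>j. g j z) = PX (1 - z) * G z" if "z \<in> A" for z
  proof -
    have s: "summable (\<lambda>j. px j * (1 - z) ^ j)"
      by (rule powser_summable[OF sx]) (use A1[OF that] in auto)
    have "(\<Sum>j. g j z) = (\<Sum>j. px j * (1 - z) ^ j * G z)"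
      unfolding g_def by (intro suminf_cong) (simp add: mult_ac)
    also have "\<dots> = (\<Sum>j. px j * (1 - z) ^ j) * G z"
      by (rule suminf_mult2[OF s, symmetric])
    finally show ?thesis by (simp add: PX_def)
  qed
  have holg: "(\<lambda>z. \<Sum>j<n. g j z) holomorphic_on A" for n
    unfolding g_def using holG by (intro holomorphic_intros)
  have holl: "(\<lambda>z. PX (1 - z) * G z) holomorphic_on A"
    using holG holX by (intro holomorphic_intros)
  have lim: "(\<lambda>n. contour_integral c (\<lambda>z. \<Sum>j<n. g j z)) \<longlonglongrightarrow> contour_integral c (\<lambda>z. PX (1 - z) * G z)"
    by (rule UL[OF oA c(1) cA' holg holl ul eq])
  have val: "contour_integral c (\<lambda>z. \<Sum>j<n. g j z) = (\<Sum>j<n. px j * qy j * (2 * pi * \<i>))" for n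
  proof -
    have ci: "(\<lambda>z. (1 - z) ^ j * G z) contour_integrable_on c" for j
      by (rule contour_integrable_holomorphic_simple[OF _ oA c(1) cA']) (use holG in \<open>intro holomorphic_intros\<close>)
    have "contour_integral c (\<lambda>z. \<Sum>j<n. g j z) = (\<Sum>j<n. contour_integral c (g j))"
      by (rule contour_integral_sum) (auto simp: g_def intro!: contour_integrable_lmul ci)
    also have "\<dots> = (\<Sum>j<n. px j * qy j * (2 * pi * \<i>))"
      unfolding g_def
      by (intro sum.cong refl, subst contour_integral_lmul) (auto intro: ci simp: step1)
    finally show ?thesis .
  qed
  have "(\<lambda>j. px j * qy j * (2 * pi * \<i>)) sums contour_integral c (\<lambda>z. PX (1 - z) * G z)"
    unfolding sums_def using lim val by simp
  then have "(\<lambda>j. px j * qy j * (2 * pi * \<i>) / (2 * pi * \<i>)) sums (contour_integral c (\<lambda>z. PX (1 - z) * G z) / (2 * pi * \<i>))"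
    by (rule sums_divide)
  then show ?thesis by (simp add: PX_def G_def QY_def)
qed


lemma RX:
  fixes p :: "nat \<Rightarrow> complex" and K :: "complex set"
  assumes K: "compact K" "K \<noteq> {}" "1 \<notin> K"
    and KS: "K \<subseteq> interior {s. summable (\<lambda>j. (1 - s) ^ j * p j)}"
  shows "\<exists>\<rho>2. (\<forall>z\<in>K. cmod (1 - z) < \<rho>2) \<and> summable (\<lambda>j. norm (p j) * \<rho>2 ^ j)"
proof -
  obtain z0 where z0: "z0 \<in> K" and mx: "\<And>z. z \<in> K \<Longrightarrow> cmod (1 - z) \<le> cmod (1 - z0)"
    using continuous_attains_sup[OF K(1,2), of "\<lambda>z. cmod (1 - z)"]
      continuous_on_norm[OF continuous_on_diff[OF continuous_on_const continuous_on_id]]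
    by blast
  define R where "R = cmod (1 - z0)"
  have R: "0 < R" using z0 K(3) by (auto simp: R_def)
  obtain e where e: "0 < e" and be: "ball z0 e \<subseteq> {s. summable (\<lambda>j. (1 - s) ^ j * p j)}"
    using KS z0 by (meson in_mono mem_interior)
  define s where "s = 1 - (1 - z0) * complex_of_real (1 + e / (2 * R))"
  have "dist z0 s = e / 2"
  proof -
    have "z0 - s = (1 - z0) * complex_of_real (e / (2 * R))" by (simp add: s_def algebra_simps)
    then have "dist z0 s = R * \<bar>e / (2 * R)\<bar>" by (simp add: dist_norm norm_mult R_def del: of_real_divide)
    then show ?thesis using R e by simp
  qed
  then have "s \<in> ball z0 e" using e by simp
  then have sm: "summable (\<lambda>j. p j * (1 - s) ^ j)" using be by (auto simp: mult.commute)
  have ns: "cmod (1 - s) = R + e / 2"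
  proof -
    have "cmod (1 - s) = R * \<bar>1 + e / (2 * R)\<bar>"
      by (simp add: s_def norm_mult R_def del: of_real_add of_real_divide)
    also have "\<bar>1 + e / (2 * R)\<bar> = 1 + e / (2 * R)" using e R by simp
    finally have "cmod (1 - s) = R * (1 + e / (2 * R))" .
    also have "\<dots> = R + e / 2" using R by (simp add: distrib_left)
    finally show ?thesis .
  qed
  define \<rho>2 where "\<rho>2 = R + e / 4"
  have nq: "norm (of_real \<rho>2 :: complex) = \<rho>2" using e R unfolding norm_of_real by (simp add: \<rho>2_def)
  moreover have "\<rho>2 < cmod (1 - s)" using ns e R by (simp add: \<rho>2_def)
  ultimately have "norm (of_real \<rho>2 :: complex) < cmod (1 - s)" by simp
  from powser_insidea[OF sm this] have "summable (\<lambda>j. norm (p j) * \<rho>2 ^ j)"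
    by (simp only: norm_mult norm_power nq)
  moreover have "\<forall>z\<in>K. cmod (1 - z) < \<rho>2" using mx e by (fastforce simp: \<rho>2_def R_def)
  ultimately show ?thesis by blast
qed

lemma RY:
  fixes p :: "nat \<Rightarrow> complex" and K :: "complex set"
  assumes K: "compact K" "K \<noteq> {}" "1 \<notin> K"
    and KS: "K \<subseteq> interior {z. z \<noteq> 1 \<and> summable (\<lambda>j. (1 - cnj z / (cnj z - 1)) ^ j * p j)}"
  shows "\<exists>\<rho>1>0. (\<forall>z\<in>K. \<rho>1 < cmod (1 - z)) \<and> summable (\<lambda>j. norm (p j) * (1 / \<rho>1) ^ j)"
proof -
  obtain z0 where z0: "z0 \<in> K" and mn: "\<And>z. z \<in> K \<Longrightarrow> cmod (1 - z0) \<le> cmod (1 - z)"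
    using continuous_attains_inf[OF K(1,2), of "\<lambda>z. cmod (1 - z)"]
      continuous_on_norm[OF continuous_on_diff[OF continuous_on_const continuous_on_id]]
    by blast
  define R where "R = cmod (1 - z0)"
  have R: "0 < R" using z0 K(3) by (auto simp: R_def)
  obtain e where e: "0 < e" and be: "ball z0 e \<subseteq> {z. z \<noteq> 1 \<and> summable (\<lambda>j. (1 - cnj z / (cnj z - 1)) ^ j * p j)}"
    using KS z0 by (meson in_mono mem_interior)
  define t where "t = min (1/2) (e / (2 * R))"
  have t: "0 < t" "t \<le> 1/2" "R * t < e" using e R
    by (auto simp: t_def min_def field_simps)
  define s where "s = 1 - (1 - z0) * complex_of_real (1 - t)"
  have "dist z0 s = R * t"
  proof -
    have "z0 - s = - ((1 - z0) * complex_of_real t)" by (simp add: s_def algebra_simps)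
    then show ?thesis using t by (simp add: dist_norm norm_mult R_def)
  qed
  then have "s \<in> ball z0 e" using t by simp
  then have s1: "s \<noteq> 1" and sm0: "summable (\<lambda>j. (1 - cnj s / (cnj s - 1)) ^ j * p j)" using be by auto
  have ns: "cmod (1 - s) = R * (1 - t)"
  proof -
    have "cmod (1 - s) = R * \<bar>1 - t\<bar>"
      by (simp add: s_def norm_mult R_def del: of_real_diff)
    then show ?thesis using t by simp
  qed
  have cs: "cnj s - 1 \<noteq> 0" using s1 by (metis complex_cnj_one complex_cnj_cnj eq_iff_diff_eq_0)
  have w: "1 - cnj s / (cnj s - 1) = inverse (1 - cnj s)"
    using cs by (simp add: field_simps)
  have sm: "summable (\<lambda>j. p j * inverse (1 - cnj s) ^ j)" using sm0 by (simp add: w mult.commute)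
  define \<rho>1 where "\<rho>1 = R * (1 - t / 2)"
  have r1: "0 < \<rho>1" using R t by (simp add: \<rho>1_def)
  have "norm (inverse (1 - cnj s)) = 1 / (R * (1 - t))"
  proof -
    have "norm (1 - cnj s) = cmod (1 - s)" by (metis complex_cnj_one complex_cnj_diff complex_mod_cnj)
    then show ?thesis using ns by (metis norm_inverse inverse_eq_divide)
  qed
  moreover have "1 / \<rho>1 < 1 / (R * (1 - t))"
    using R t r1 by (intro divide_strict_left_mono) (auto simp: \<rho>1_def intro!: mult_pos_pos mult_strict_left_mono)
  moreover have nq: "norm (of_real (1 / \<rho>1) :: complex) = 1 / \<rho>1" using r1 unfolding norm_of_real by simp
  ultimately have "norm (of_real (1 / \<rho>1) :: complex) < norm (inverse (1 - cnj s))" by simp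
  from powser_insidea[OF sm this] have "summable (\<lambda>j. norm (p j) * (1 / \<rho>1) ^ j)"
    by (simp only: norm_mult norm_power nq)
  moreover have "\<forall>z\<in>K. \<rho>1 < cmod (1 - z)"
  proof
    fix z assume "z \<in> K"
    then have "R \<le> cmod (1 - z)" using mn R_def by auto
    moreover have "\<rho>1 < R" using R t by (simp add: \<rho>1_def)
    ultimately show "\<rho>1 < cmod (1 - z)" by simp
  qed
  ultimately show ?thesis using r1 by blast
qed



theorem theorem13:
  fixes a :: real and x y :: "real \<Rightarrow> real" and c :: "real \<Rightarrow> complex"
  assumes "valid_path c" and "pathfinish c = pathstart c"
    and "1 \<notin> path_image c"
    and "winding_number c 1 = -1"
    and "path_image c \<subseteq> N_ROC a x \<inter> N_ROC_reflected a y"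
  shows "(\<lambda>j. complex_of_real (x (a + real j + 1) * y (a + real j + 1))) sums
           (1 / (2 * pi * \<i>) * contour_integral c
              (\<lambda>z. N_transform a x z * cnj (N_transform a y (cnj z / (cnj z - 1))) * inverse (1 - z)))"
proof -
  define K where "K = path_image c"
  define px where "px = (\<lambda>j::nat. complex_of_real (x (a + real j + 1)))"
  define qy where "qy = (\<lambda>j::nat. complex_of_real (y (a + real j + 1)))"
  have K: "compact K" "K \<noteq> {}" "1 \<notin> K"
    using assms(1,3) by (auto simp: K_def compact_valid_path_image path_image_nonempty)
  have KX: "K \<subseteq> interior {s. summable (\<lambda>j. (1 - s) ^ j * px j)}"
  proof -
    have "N_ROC a x = interior {s. summable (\<lambda>j. (1 - s) ^ j * px j)}"
      unfolding N_ROC_def px_def by (rule refl)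
    moreover have "K \<subseteq> N_ROC a x" using assms(5) unfolding K_def by (rule le_infE)
    ultimately show ?thesis by (simp only:)
  qed
  have KY: "K \<subseteq> interior {z. z \<noteq> 1 \<and> summable (\<lambda>j. (1 - cnj z / (cnj z - 1)) ^ j * qy j)}"
  proof -
    have "N_ROC_reflected a y = interior {z. z \<noteq> 1 \<and> summable (\<lambda>j. (1 - cnj z / (cnj z - 1)) ^ j * qy j)}"
      unfolding N_ROC_reflected_def qy_def by (rule refl)
    moreover have "K \<subseteq> N_ROC_reflected a y" using assms(5) unfolding K_def by (rule le_infE)
    ultimately show ?thesis by (simp only:)
  qed
  obtain \<rho>2 where r2: "\<forall>z\<in>K. cmod (1 - z) < \<rho>2" and sx: "summable (\<lambda>j. norm (px j) * \<rho>2 ^ j)"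
    using RX[OF K KX] by blast
  obtain \<rho>1 where r1: "0 < \<rho>1" "\<forall>z\<in>K. \<rho>1 < cmod (1 - z)" and sy: "summable (\<lambda>j. norm (qy j) * (1 / \<rho>1) ^ j)"
    using RY[OF K KY] by blast
  have cA: "path_image c \<subseteq> {z. \<rho>1 < cmod (1 - z) \<and> cmod (1 - z) < \<rho>2}"
    using r1 r2 by (auto simp: K_def)
  note co = core[OF assms(1,2,4) cA r1(1) sx sy]
  have eq: "N_transform a x z * cnj (N_transform a y (cnj z / (cnj z - 1))) * inverse (1 - z) =
       (\<Sum>j. px j * (1 - z) ^ j) * ((\<Sum>l. qy l * inverse (1 - z) ^ l) * inverse (1 - z))"
    if z: "z \<in> path_image c" for z
  proof -
    have z1: "z \<noteq> 1" using z assms(3) by auto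
    have e1: "N_transform a x z = (\<Sum>j. px j * (1 - z) ^ j)"
      unfolding N_transform_def px_def by (rule arg_cong[where f=suminf]) (rule ext, rule mult.commute)
    have sm: "summable (\<lambda>j. (1 - cnj z / (cnj z - 1)) ^ j * qy j)"
      using KY z interior_subset unfolding K_def by blast
    have cz: "cnj z - 1 \<noteq> 0" using z1 by (metis complex_cnj_one complex_cnj_cnj eq_iff_diff_eq_0)
    have w: "1 - cnj z / (cnj z - 1) = inverse (1 - cnj z)"
      using cz by (simp add: field_simps)
    have "(\<lambda>j. cnj ((1 - cnj z / (cnj z - 1)) ^ j * qy j)) sums cnj (\<Sum>j. (1 - cnj z / (cnj z - 1)) ^ j * qy j)"
      by (subst sums_cnj) (rule summable_sums[OF sm])
    from sums_unique[OF this]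
    have "cnj (N_transform a y (cnj z / (cnj z - 1))) = (\<Sum>j. cnj ((1 - cnj z / (cnj z - 1)) ^ j * qy j))"
      unfolding N_transform_def qy_def .
    also have "\<dots> = (\<Sum>l. qy l * inverse (1 - z) ^ l)"
      unfolding w by (simp add: qy_def mult.commute)
    finally show ?thesis using e1 by (simp add: mult.assoc)
  qed
  have "contour_integral c
              (\<lambda>z. N_transform a x z * cnj (N_transform a y (cnj z / (cnj z - 1))) * inverse (1 - z)) =
        contour_integral c (\<lambda>z. (\<Sum>j. px j * (1 - z) ^ j) * ((\<Sum>l. qy l * inverse (1 - z) ^ l) * inverse (1 - z)))"
    by (rule contour_integral_eq) (rule eq)
  note calc = this
  have feq: "(\<lambda>j. complex_of_real (x (a + real j + 1) * y (a + real j + 1))) = (\<lambda>j. px j * qy j)"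
    by (simp add: px_def qy_def)
  show ?thesis unfolding calc feq using co by (simp only: times_divide_eq_left mult_1_left)
qed

end
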